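(* Let $\mathbf{A}$ be a finite algebra with $|A|>1$. Then the diagonal $\Delta=\{(a,a): a\in A\}$ does not Jónsson absorb $\mathbf{A}^2$.
   Context: Jónsson absorption: a subuniverse $B$ of an algebra $\mathbf{C}$ Jónsson absorbs $\mathbf{C}$ if there are ternary terms $d_0,\dots,d_n$ such that $d_i(b,c,b')\in B$ for all $i$, all $b,b'\in B$, $c\in C$; $d_i(x,y,y)=d_{i+1}(x,x,y)$ for all $i<n$; $d_0(x,y,z)=x$ and $d_n(x,y,z)=z$ (identities holding in $\mathbf{C}$). *)

theory Defs
  imports Main
begin

datatype 'f trm = Var nat | App 'f "'f trm list"

fun wf_trm :: "('f \<Rightarrow> nat) \<Rightarrow> 'f trm \<Rightarrow> bool" where
  "wf_trm ar (Var n) = True"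
| "wf_trm ar (App f ts) = (length ts = ar f \<and> (\<forall>t\<in>set ts. wf_trm ar t))"

fun vars :: "'f trm \<Rightarrow> nat set" where
  "vars (Var n) = {n}"
| "vars (App f ts) = (\<Union>t\<in>set ts. vars t)"

fun eval :: "('f \<Rightarrow> 'a list \<Rightarrow> 'a) \<Rightarrow> (nat \<Rightarrow> 'a) \<Rightarrow> 'f trm \<Rightarrow> 'a" where
  "eval I e (Var n) = e n"
| "eval I e (App f ts) = I f (map (eval I e) ts)"

definition algebra :: "('f \<Rightarrow> nat) \<Rightarrow> ('f \<Rightarrow> 'a list \<Rightarrow> 'a) \<Rightarrow> 'a set \<Rightarrow> bool" where
  "algebra ar I A \<longleftrightarrow> (\<forall>f xs. length xs = ar f \<and> set xs \<subseteq> A \<longrightarrow> I f xs \<in> A)"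

definition subuniverse :: "('f \<Rightarrow> nat) \<Rightarrow> ('f \<Rightarrow> 'a list \<Rightarrow> 'a) \<Rightarrow> 'a set \<Rightarrow> 'a set \<Rightarrow> bool" where
  "subuniverse ar I C B \<longleftrightarrow> B \<subseteq> C \<and> (\<forall>f xs. length xs = ar f \<and> set xs \<subseteq> B \<longrightarrow> I f xs \<in> B)"

definition prod_ops :: "('f \<Rightarrow> 'a list \<Rightarrow> 'a) \<Rightarrow> 'f \<Rightarrow> ('a \<times> 'a) list \<Rightarrow> 'a \<times> 'a" where
  "prod_ops I f xs = (I f (map fst xs), I f (map snd xs))"

definition env3 :: "'a \<Rightarrow> 'a \<Rightarrow> 'a \<Rightarrow> nat \<Rightarrow> 'a" where
  "env3 x y z = (\<lambda>i. if i = 0 then x else if i = 1 then y else z)"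

definition ternary_term :: "('f \<Rightarrow> nat) \<Rightarrow> 'f trm \<Rightarrow> bool" where
  "ternary_term ar t \<longleftrightarrow> wf_trm ar t \<and> vars t \<subseteq> {0, 1, 2}"

definition jonsson_absorbs :: "('f \<Rightarrow> nat) \<Rightarrow> ('f \<Rightarrow> 'c list \<Rightarrow> 'c) \<Rightarrow> 'c set \<Rightarrow> 'c set \<Rightarrow> bool" where
  "jonsson_absorbs ar I C B \<longleftrightarrow> subuniverse ar I C B \<and>
     (\<exists>(n::nat) (d :: nat \<Rightarrow> 'f trm).
        (\<forall>i\<le>n. ternary_term ar (d i)) \<and>
        (\<forall>i\<le>n. \<forall>b\<in>B. \<forall>b'\<in>B. \<forall>c\<in>C. eval I (env3 b c b') (d i) \<in> B) \<and>
        (\<forall>i<n. \<forall>x\<in>C. \<forall>y\<in>C. eval I (env3 x y y) (d i) = eval I (env3 x x y) (d (Suc i))) \<and>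
        (\<forall>x\<in>C. \<forall>y\<in>C. \<forall>z\<in>C. eval I (env3 x y z) (d 0) = x \<and> eval I (env3 x y z) (d n) = z))"

end

theory Submission
  imports Defs
begin

lemma prod_ops_app: "prod_ops I f xs = (I f (map fst xs), I f (map snd xs))"
  by (simp add: prod_ops_def)
lemma eval_prod_fst: "fst (eval (prod_ops I) e t) = eval I (\<lambda>i. fst (e i)) t"
proof (induction t)
  case (App f ts)
  have m: "map (\<lambda>t. fst (eval (prod_ops I) e t)) ts = map (eval I (\<lambda>i. fst (e i))) ts"
    using App by (intro map_cong) auto
  have "fst (eval (prod_ops I) e (App f ts)) = I f (map fst (map (eval (prod_ops I) e) ts))"
    by (simp only: eval.simps prod_ops_app fst_conv)
  also have "\<dots> = I f (map (\<lambda>t. fst (eval (prod_ops I) e t)) ts)"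
    by (simp only: map_map o_def)
  also have "\<dots> = eval I (\<lambda>i. fst (e i)) (App f ts)"
    by (simp only: m eval.simps)
  finally show ?case .
qed simp
lemma eval_prod_snd: "snd (eval (prod_ops I) e t) = eval I (\<lambda>i. snd (e i)) t"
proof (induction t)
  case (App f ts)
  have m: "map (\<lambda>t. snd (eval (prod_ops I) e t)) ts = map (eval I (\<lambda>i. snd (e i))) ts"
    using App by (intro map_cong) auto
  have "snd (eval (prod_ops I) e (App f ts)) = I f (map snd (map (eval (prod_ops I) e) ts))"
    by (simp only: eval.simps prod_ops_app snd_conv)
  also have "\<dots> = I f (map (\<lambda>t. snd (eval (prod_ops I) e t)) ts)"
    by (simp only: map_map o_def)
  also have "\<dots> = eval I (\<lambda>i. snd (e i)) (App f ts)"
    by (simp only: m eval.simps)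
  finally show ?case .
qed simp
lemma eval_prod:
  "eval (prod_ops I) e t = (eval I (\<lambda>i. fst (e i)) t, eval I (\<lambda>i. snd (e i)) t)"
  by (metis eval_prod_fst eval_prod_snd prod.collapse)

lemma fst_env3: "(\<lambda>i. fst (env3 x y z i)) = env3 (fst x) (fst y) (fst z)"
  by (auto simp: env3_def)
lemma snd_env3: "(\<lambda>i. snd (env3 x y z i)) = env3 (snd x) (snd y) (snd z)"
  by (auto simp: env3_def)

theorem proposition2p8:
  fixes A :: "'a set" and ar :: "'f \<Rightarrow> nat" and I :: "'f \<Rightarrow> 'a list \<Rightarrow> 'a"
  assumes "algebra ar I A" and "finite A" and "card A > 1"
  shows "\<not> jonsson_absorbs ar (prod_ops I) (A \<times> A) {(a, a) | a. a \<in> A}"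
proof
  assume "jonsson_absorbs ar (prod_ops I) (A \<times> A) {(a, a) | a. a \<in> A}"
  then obtain n d where
    abs: "\<forall>i\<le>n. \<forall>b\<in>{(a, a) | a. a \<in> A}. \<forall>b'\<in>{(a, a) | a. a \<in> A}. \<forall>c\<in>A \<times> A.
           eval (prod_ops I) (env3 b c b') (d i) \<in> {(a, a) | a. a \<in> A}" and
    chain: "\<forall>i<n. \<forall>x\<in>A \<times> A. \<forall>y\<in>A \<times> A. eval (prod_ops I) (env3 x y y) (d i)
              = eval (prod_ops I) (env3 x x y) (d (Suc i))" and
    ends: "\<forall>x\<in>A \<times> A. \<forall>y\<in>A \<times> A. \<forall>z\<in>A \<times> A. eval (prod_ops I) (env3 x y z) (d 0) = x
              \<and> eval (prod_ops I) (env3 x y z) (d n) = z"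
    unfolding jonsson_absorbs_def by (elim conjE exE) (rule that)
  have mid: "eval I (env3 a p a') (d i) = eval I (env3 a q a') (d i)"
    if "i \<le> n" "a \<in> A" "p \<in> A" "q \<in> A" "a' \<in> A" for i a p q a'
  proof -
    have "eval (prod_ops I) (env3 (a,a) (p,q) (a',a')) (d i) \<in> {(a, a) | a. a \<in> A}"
      using abs that by simp
    then show ?thesis by (auto simp: eval_prod fst_env3 snd_env3)
  qed
  have ch: "eval I (env3 x y y) (d i) = eval I (env3 x x y) (d (Suc i))"
    if "i < n" "x \<in> A" "y \<in> A" for i x y
  proof -
    have "eval (prod_ops I) (env3 (x,x) (y,y) (y,y)) (d i)
              = eval (prod_ops I) (env3 (x,x) (x,x) (y,y)) (d (Suc i))"
      using chain that by simp
    then show ?thesis by (simp add: eval_prod fst_env3)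
  qed
  have e0: "eval I (env3 x y z) (d 0) = x" and en: "eval I (env3 x y z) (d n) = z"
    if "x \<in> A" "y \<in> A" "z \<in> A" for x y z
  proof -
    have "eval (prod_ops I) (env3 (x,x) (y,y) (z,z)) (d 0) = (x,x)
          \<and> eval (prod_ops I) (env3 (x,x) (y,y) (z,z)) (d n) = (z,z)"
      using ends that by simp
    then show "eval I (env3 x y z) (d 0) = x" "eval I (env3 x y z) (d n) = z"
      by (simp_all add: eval_prod fst_env3)
  qed
  have key: "i \<le> n \<Longrightarrow> eval I (env3 x x y) (d i) = x" if "x \<in> A" "y \<in> A" for i x y
  proof (induction i)
    case 0 then show ?case using e0 that by blast
  next
    case (Suc i)
    have "eval I (env3 x x y) (d (Suc i)) = eval I (env3 x y y) (d i)"
      using ch[of i x y] Suc.prems that by simp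
    also have "\<dots> = eval I (env3 x x y) (d i)"
      using mid[of i x y x y] Suc.prems that by simp
    finally show ?case using Suc by simp
  qed
  obtain x y where "x \<in> A" "y \<in> A" "x \<noteq> y"
  proof -
    from assms(3) have "\<not> (\<forall>x\<in>A. \<forall>y\<in>A. x = y)"
      using card_le_Suc0_iff_eq[OF assms(2)] by auto
    then show ?thesis using that by blast
  qed
  moreover have "eval I (env3 x x y) (d n) = x" using key \<open>x \<in> A\<close> \<open>y \<in> A\<close> by blast
  moreover have "eval I (env3 x x y) (d n) = y" using en \<open>x \<in> A\<close> \<open>y \<in> A\<close> by blast
  ultimately show False by simp
qed

end
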